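(* Fix $\beta>0$ and a transient MDP with a sink state as in the context. Let $\pi=(\bm d)_\infty\in\Pi_{\mathrm{SR}}$. Then there exists a vector $\bm f\in\mathbb R^S$ with $\bm f\ge\bm 0$, $\bm f\neq\bm 0$, $\bm f^\top\bm B^{\bm d}=\rho(\bm B^{\bm d})\,\bm f^\top$, and \[ \bm f^\top\bm b^{\bm d}>0. \]
   Context: MDP: states $\mathcal S=\{1,\dots,S\}$ plus sink state $e$ ($p(e,a,e)=1$, $r(e,a,e)=0$); finite actions; transitions $p(s,a,s')$, real rewards $r(s,a,s')$. Transience (standing assumption): for every stationary deterministic policy $\pi$, $\sum_{t\ge0}\mathbb P^{\pi,s}[\tilde s_t=s']<\infty$ for all $s,s'\in\mathcal S$. $\Pi_{\mathrm{SR}}$: stationary randomized policies $(\bm d)_\infty$, $d_a(s)$ the probability of action $a$ in $s$. $B^{\bm d}_{s,s'}=\sum_a p(s,a,s')d_a(s)e^{-\beta r(s,a,s')}$, $b^{\bm d}_s=\sum_a p(s,a,e)d_a(s)e^{-\beta r(s,a,e)}$; $\rho$ is the spectral radius. *)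

theory Defs
  imports Complex_Main "Jordan_Normal_Form.Spectral_Radius"
begin

text \<open>States of S are 0,...,S-1; the sink state e is encoded as the index S.
  A s is the (finite, nonempty) set of actions available in state s.
  p s a s' transition probabilities, r s a s' rewards.\<close>

definition mdp :: "nat \<Rightarrow> (nat \<Rightarrow> 'a set) \<Rightarrow> (nat \<Rightarrow> 'a \<Rightarrow> nat \<Rightarrow> real) \<Rightarrow> bool" where
  "mdp S A p \<longleftrightarrow>
     (\<forall>s\<le>S. finite (A s) \<and> A s \<noteq> {}) \<and>
     (\<forall>s<S. \<forall>a\<in>A s. (\<forall>s'\<le>S. 0 \<le> p s a s') \<and> (\<Sum>s'\<le>S. p s a s') = 1) \<and>
     (\<forall>a\<in>A S. p S a S = 1)"

definition trans_mat :: "nat \<Rightarrow> (nat \<Rightarrow> 'a \<Rightarrow> nat \<Rightarrow> real) \<Rightarrow> (nat \<Rightarrow> 'a) \<Rightarrow> real mat" where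
  "trans_mat S p \<sigma> = mat S S (\<lambda>(s, s'). p s (\<sigma> s) s')"

text \<open>P^{sigma,s}[state at time t = s'] for s, s' in S equals the (s,s') entry of the t-th power.\<close>
definition transient :: "nat \<Rightarrow> (nat \<Rightarrow> 'a set) \<Rightarrow> (nat \<Rightarrow> 'a \<Rightarrow> nat \<Rightarrow> real) \<Rightarrow> bool" where
  "transient S A p \<longleftrightarrow>
     (\<forall>\<sigma>. (\<forall>s<S. \<sigma> s \<in> A s) \<longrightarrow>
        (\<forall>s<S. \<forall>s'<S. summable (\<lambda>t. (trans_mat S p \<sigma> ^\<^sub>m t) $$ (s, s'))))"

definition rand_rule :: "nat \<Rightarrow> (nat \<Rightarrow> 'a set) \<Rightarrow> (nat \<Rightarrow> 'a \<Rightarrow> real) \<Rightarrow> bool" where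
  "rand_rule S A d \<longleftrightarrow> (\<forall>s<S. (\<forall>a\<in>A s. 0 \<le> d s a) \<and> (\<Sum>a\<in>A s. d s a) = 1)"

definition Bmat :: "nat \<Rightarrow> (nat \<Rightarrow> 'a set) \<Rightarrow> (nat \<Rightarrow> 'a \<Rightarrow> nat \<Rightarrow> real) \<Rightarrow>
    (nat \<Rightarrow> 'a \<Rightarrow> nat \<Rightarrow> real) \<Rightarrow> real \<Rightarrow> (nat \<Rightarrow> 'a \<Rightarrow> real) \<Rightarrow> real mat" where
  "Bmat S A p r \<beta> d = mat S S (\<lambda>(s, s'). \<Sum>a\<in>A s. p s a s' * d s a * exp (- \<beta> * r s a s'))"

definition bvec :: "nat \<Rightarrow> (nat \<Rightarrow> 'a set) \<Rightarrow> (nat \<Rightarrow> 'a \<Rightarrow> nat \<Rightarrow> real) \<Rightarrow>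
    (nat \<Rightarrow> 'a \<Rightarrow> nat \<Rightarrow> real) \<Rightarrow> real \<Rightarrow> (nat \<Rightarrow> 'a \<Rightarrow> real) \<Rightarrow> real vec" where
  "bvec S A p r \<beta> d = vec S (\<lambda>s. \<Sum>a\<in>A s. p s a S * d s a * exp (- \<beta> * r s a S))"

definition spec_rad :: "real mat \<Rightarrow> real" where
  "spec_rad M = spectral_radius (map_mat complex_of_real M)"

end

theory Submission
  imports Defs
begin

lemma pow_Suc_entry:
  fixes B :: "'b::comm_semiring_1 mat"
  assumes B: "B \<in> carrier_mat n n" and i: "i < n" and j: "j < n"
  shows "(B ^\<^sub>m Suc k) $$ (i,j) = (\<Sum>l<n. (B ^\<^sub>m k) $$ (i,l) * B $$ (l,j))"
  using B i j by (simp add: scalar_prod_def row_def col_def lessThan_atLeast0)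

lemma pow_nonneg:
  fixes B :: "real mat"
  assumes B: "B \<in> carrier_mat n n" and nn: "\<forall>i<n. \<forall>j<n. 0 \<le> B $$ (i,j)"
  shows "i < n \<Longrightarrow> j < n \<Longrightarrow> 0 \<le> (B ^\<^sub>m k) $$ (i,j)"
proof (induct k arbitrary: i j)
  case 0 thus ?case using B by auto
next
  case (Suc k)
  show ?case unfolding pow_Suc_entry[OF B Suc.prems]
    using Suc nn by (intro sum_nonneg mult_nonneg_nonneg) auto
qed

lemma smult_smult_mat: "a \<cdot>\<^sub>m (b \<cdot>\<^sub>m M) = (a * b :: 'b::comm_ring_1) \<cdot>\<^sub>m M"
  by (rule eq_matI) (auto simp: mult.assoc)

lemma smult_pow:
  fixes B :: "'b::comm_ring_1 mat"
  assumes B: "B \<in> carrier_mat n n"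
  shows "(a \<cdot>\<^sub>m B) ^\<^sub>m k = a ^ k \<cdot>\<^sub>m (B ^\<^sub>m k)"
proof (induct k)
  case 0 thus ?case using B by (auto intro!: eq_matI)
next
  case (Suc k)
  have "(a \<cdot>\<^sub>m B) ^\<^sub>m Suc k = (a ^ k \<cdot>\<^sub>m (B ^\<^sub>m k)) * (a \<cdot>\<^sub>m B)" using Suc by simp
  also have "\<dots> = a ^ Suc k \<cdot>\<^sub>m (B ^\<^sub>m Suc k)"
    using B by (simp add: mult_smult_assoc_mat[of _ n n _ n] mult_smult_distrib[of _ n n _ n]
       smult_smult_mat)
  finally show ?case .
qed

lemma spec_rad_nonneg:
  assumes B: "B \<in> carrier_mat n n" and n: "0 < n"
  shows "0 \<le> spec_rad B"
proof -
  have "map_mat complex_of_real B \<in> carrier_mat n n" using B by auto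
  from spectral_radius_mem_max(1)[OF this n] show ?thesis unfolding spec_rad_def by auto
qed

lemma pow_bound:
  fixes B :: "real mat"
  assumes B: "B \<in> carrier_mat n n" and n: "0 < n" and s: "spec_rad B < s"
  shows "\<exists>c. \<forall>k i j. i < n \<longrightarrow> j < n \<longrightarrow> \<bar>(B ^\<^sub>m k) $$ (i,j)\<bar> \<le> c * s ^ k"
proof -
  have s0: "0 < s" using spec_rad_nonneg[OF B n] s by auto
  define Bc where "Bc = map_mat complex_of_real B"
  define C where "C = map_mat complex_of_real ((1/s) \<cdot>\<^sub>m B)"
  have Bc: "Bc \<in> carrier_mat n n" and C: "C \<in> carrier_mat n n" using B unfolding Bc_def C_def by auto
  have "spectral_radius C < 1"
  proof -
    from spectral_radius_mem_max(1)[OF C n] obtain lam where lam: "lam \<in> spectrum C"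
      and eq: "spectral_radius C = norm lam" by auto
    from lam obtain w where w: "w \<in> carrier_vec n" "w \<noteq> 0\<^sub>v n" "C *\<^sub>v w = lam \<cdot>\<^sub>v w"
      unfolding spectrum_def eigenvalue_def eigenvector_def using C by auto
    have "Bc *\<^sub>v w = (of_real s * lam) \<cdot>\<^sub>v w"
    proof (rule eq_vecI)
      fix i assume i: "i < dim_vec ((of_real s * lam) \<cdot>\<^sub>v w)"
      hence i: "i < n" using w by auto
      have "(C *\<^sub>v w) $ i = lam * w $ i" using w i by simp
      moreover have "(C *\<^sub>v w) $ i = of_real (1/s) * (Bc *\<^sub>v w) $ i"
        using i B w(1) unfolding C_def Bc_def
        by (simp add: scalar_prod_def row_def sum_distrib_left mult.assoc)
      ultimately have "of_real s * (lam * w $ i) = of_real s * (of_real (1/s) * (Bc *\<^sub>v w) $ i)"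
        by simp
      also have "\<dots> = (Bc *\<^sub>v w) $ i" using s0 by (simp add: of_real_divide)
      finally have "(Bc *\<^sub>v w) $ i = of_real s * (lam * w $ i)" by simp
      thus "(Bc *\<^sub>v w) $ i = ((of_real s * lam) \<cdot>\<^sub>v w) $ i" using i w by simp
    qed (use w Bc in auto)
    hence "of_real s * lam \<in> spectrum Bc"
      unfolding spectrum_def eigenvalue_def eigenvector_def using w Bc by auto
    from spectral_radius_mem_max(2)[OF Bc n imageI[OF this, of norm]]
    have "s * norm lam \<le> spec_rad B" unfolding spec_rad_def Bc_def using s0 by (simp add: norm_mult)
    with s s0 have "norm lam < 1"
      by (smt (verit, best) mult_le_cancel_left1)
    thus ?thesis using eq by simp
  qed
  from spectral_radius_jnf_norm_bound_less_1_upper_triangular[OF C this]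
  obtain c where c: "\<And>k. norm_bound (C ^\<^sub>m k) c" by auto
  show ?thesis
  proof (intro exI allI impI)
    fix k i j assume i: "i < n" and j: "j < n"
    have "C ^\<^sub>m k = map_mat complex_of_real (((1/s) \<cdot>\<^sub>m B) ^\<^sub>m k)"
      unfolding C_def by (rule of_real_hom.mat_hom_pow[symmetric], use B in auto)
    also have "\<dots> = map_mat complex_of_real ((1/s)^k \<cdot>\<^sub>m (B ^\<^sub>m k))" using smult_pow[OF B] by simp
    finally have "norm (complex_of_real ((1/s)^k * (B ^\<^sub>m k) $$ (i,j))) \<le> c"
      using c[of k] i j B unfolding norm_bound_def by auto
    moreover have "norm (complex_of_real ((1/s)^k * (B ^\<^sub>m k) $$ (i,j))) = (1/s)^k * \<bar>(B ^\<^sub>m k) $$ (i,j)\<bar>"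
      using s0 by (simp only: norm_of_real abs_mult) simp
    ultimately have "(1/s)^k * \<bar>(B ^\<^sub>m k) $$ (i,j)\<bar> \<le> c" by simp
    hence "s^k * ((1/s)^k * \<bar>(B ^\<^sub>m k) $$ (i,j)\<bar>) \<le> c * s^k" using s0
      by (simp add: mult.commute mult_left_mono)
    thus "\<bar>(B ^\<^sub>m k) $$ (i,j)\<bar> \<le> c * s ^ k" using s0
      by (simp add: power_one_over field_simps)
  qed
qed

lemma approx_eig:
  fixes B :: "real mat"
  assumes B: "B \<in> carrier_mat n n" and n: "0 < n" and nn: "\<forall>i<n. \<forall>j<n. 0 \<le> B $$ (i,j)"
    and t: "spec_rad B < t"
  shows "\<exists>x. (\<forall>j<n. 0 \<le> x j) \<and> (\<Sum>j<n. x j) = 1 \<and>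
     (\<forall>j<n. 0 \<le> t * x j - (\<Sum>i<n. B $$ (i,j) * x i) \<and> t * x j - (\<Sum>i<n. B $$ (i,j) * x i) \<le> t - spec_rad B)"
proof -
  define \<rho> where "\<rho> = spec_rad B"
  have \<rho>0: "0 \<le> \<rho>" unfolding \<rho>_def by (rule spec_rad_nonneg[OF B n])
  have t0: "0 < t" using t \<rho>0 unfolding \<rho>_def by auto
  define s where "s = (\<rho> + t) / 2"
  have s: "spec_rad B < s" "0 < s" "s < t" using t \<rho>0 unfolding s_def \<rho>_def by auto
  from pow_bound[OF B n s(1)] obtain c where c: "\<And>k i j. i < n \<Longrightarrow> j < n \<Longrightarrow> \<bar>(B ^\<^sub>m k) $$ (i,j)\<bar> \<le> c * s ^ k"
    by blast
  define a where "a j k = (\<Sum>l<n. (B ^\<^sub>m k) $$ (l,j)) / t ^ k" for j k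
  have a_nonneg: "0 \<le> a j k" if "j < n" for j k
    unfolding a_def using pow_nonneg[OF B nn _ that] t0 by (auto intro!: sum_nonneg divide_nonneg_pos)
  have summ: "summable (a j)" if j: "j < n" for j
  proof (rule summable_comparison_test)
    show "summable (\<lambda>k. (real n * c) * (s / t) ^ k)"
      by (rule summable_mult, rule summable_geometric) (use s in auto)
    show "\<exists>N. \<forall>k\<ge>N. norm (a j k) \<le> real n * c * (s / t) ^ k"
    proof (intro exI allI impI)
      fix k :: nat
      have "(\<Sum>l<n. (B ^\<^sub>m k) $$ (l,j)) \<le> (\<Sum>l<n. c * s ^ k)"
        by (intro sum_mono, rule abs_le_D1, rule c[OF _ j]) auto
      also have "\<dots> = real n * c * s ^ k" by simp
      finally have "a j k \<le> real n * c * s ^ k / t ^ k" unfolding a_def using t0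
        by (simp add: divide_right_mono)
      thus "norm (a j k) \<le> real n * c * (s / t) ^ k" using a_nonneg[OF j, of k]
        by (simp add: power_divide)
    qed
  qed
  define Z where "Z j = suminf (a j)" for j
  have Z_nonneg: "0 \<le> Z j" if "j < n" for j
    unfolding Z_def using summ[OF that] a_nonneg[OF that] by (simp add: suminf_nonneg)
  have a0: "a j 0 = 1" if "j < n" for j
    using that B unfolding a_def by (simp add: sum.If_cases)
  have aSuc: "a j (Suc k) = (1/t) * (\<Sum>i<n. B $$ (i,j) * a i k)" if j: "j < n" for j k
  proof -
    have "a j (Suc k) = (\<Sum>l<n. \<Sum>i<n. (B ^\<^sub>m k) $$ (l,i) * B $$ (i,j)) / t ^ Suc k"
      unfolding a_def using pow_Suc_entry[OF B _ j] by simp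
    also have "(\<Sum>l<n. \<Sum>i<n. (B ^\<^sub>m k) $$ (l,i) * B $$ (i,j))
        = (\<Sum>i<n. B $$ (i,j) * (\<Sum>l<n. (B ^\<^sub>m k) $$ (l,i)))"
      by (subst sum.swap) (simp add: sum_distrib_left mult.commute)
    also have "(\<Sum>i<n. B $$ (i,j) * (\<Sum>l<n. (B ^\<^sub>m k) $$ (l,i))) / t ^ Suc k
        = (\<Sum>i<n. (1/t) * (B $$ (i,j) * a i k))"
      unfolding sum_divide_distrib
    proof (rule sum.cong[OF refl])
      fix i
      show "B $$ (i,j) * (\<Sum>l<n. (B ^\<^sub>m k) $$ (l,i)) / t ^ Suc k = (1/t) * (B $$ (i,j) * a i k)"
        unfolding a_def using t0 by simp
    qed
    also have "\<dots> = (1/t) * (\<Sum>i<n. B $$ (i,j) * a i k)" by (simp add: sum_distrib_left)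
    finally show ?thesis .
  qed
  have Zeq: "Z j = 1 + (1/t) * (\<Sum>i<n. B $$ (i,j) * Z i)" if j: "j < n" for j
  proof -
    have "Z j - 1 = (\<Sum>k. a j (Suc k))" unfolding Z_def using suminf_split_head[OF summ[OF j]] a0[OF j] by simp
    also have "\<dots> = (\<Sum>k. (1/t) * (\<Sum>i<n. B $$ (i,j) * a i k))" using aSuc[OF j] by simp
    also have "\<dots> = (1/t) * (\<Sum>k. (\<Sum>i<n. B $$ (i,j) * a i k))"
      by (rule suminf_mult, rule summable_sum, rule summable_mult, rule summ) auto
    also have "(\<Sum>k. (\<Sum>i<n. B $$ (i,j) * a i k)) = (\<Sum>i<n. (\<Sum>k. B $$ (i,j) * a i k))"
      by (rule suminf_sum, rule summable_mult, rule summ) auto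
    also have "\<dots> = (\<Sum>i<n. B $$ (i,j) * Z i)" unfolding Z_def
      by (rule sum.cong, simp, rule suminf_mult, rule summ) auto
    finally show ?thesis by simp
  qed
  define Bc where "Bc = map_mat complex_of_real B"
  have Bc: "Bc \<in> carrier_mat n n" using B unfolding Bc_def by auto
  from spectral_radius_mem_max(1)[OF Bc n] obtain mu where mu: "mu \<in> spectrum Bc"
    and mu_eq: "spectral_radius Bc = norm mu" by auto
  have nmu: "norm mu = \<rho>" using mu_eq unfolding \<rho>_def spec_rad_def Bc_def by simp
  from mu obtain v where ev: "eigenvector Bc v mu" unfolding spectrum_def eigenvalue_def by auto
  have evd: "v \<in> carrier_vec (dim_row Bc)" "v \<noteq> 0\<^sub>v (dim_row Bc)"
    using ev unfolding eigenvector_def by blast+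
  have dBc: "dim_row Bc = n" using Bc by simp
  have v: "v \<in> carrier_vec n" "v \<noteq> 0\<^sub>v n" using evd unfolding dBc .
  define nv where "nv j = norm (v $ j)" for j
  define V where "V = (\<Sum>j<n. nv j)"
  have nv0: "0 \<le> nv j" for j unfolding nv_def by simp
  have nvV: "nv j \<le> V" if "j < n" for j unfolding V_def
    by (rule member_le_sum) (use that nv0 in auto)
  have V0: "0 < V"
  proof -
    have "\<exists>j<n. v $ j \<noteq> 0"
    proof (rule ccontr)
      assume "\<not> (\<exists>j<n. v $ j \<noteq> 0)"
      hence "v = 0\<^sub>v n" using v(1) by (intro eq_vecI) auto
      with v(2) show False by simp
    qed
    then obtain j where j: "j < n" "v $ j \<noteq> 0" by blast
    hence "0 < nv j" unfolding nv_def by simp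
    with nvV[OF j(1)] show ?thesis by simp
  qed
  have powk: "\<rho> ^ k * V \<le> (\<Sum>j<n. (\<Sum>l<n. (B ^\<^sub>m k) $$ (l,j)) * nv j)" for k
  proof -
    have pw: "Bc ^\<^sub>m k *\<^sub>v v = mu ^ k \<cdot>\<^sub>v v" by (rule eigenvector_pow[OF Bc ev])
    have Bck: "Bc ^\<^sub>m k = map_mat complex_of_real (B ^\<^sub>m k)"
      unfolding Bc_def by (rule of_real_hom.mat_hom_pow[symmetric], rule B)
    have le: "\<rho> ^ k * nv l \<le> (\<Sum>j<n. (B ^\<^sub>m k) $$ (l,j) * nv j)" if l: "l < n" for l
    proof -
      have "\<rho> ^ k * nv l = norm ((Bc ^\<^sub>m k *\<^sub>v v) $ l)"
        unfolding pw using l v nmu by (simp add: nv_def norm_mult norm_power)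
      also have "\<dots> = norm (\<Sum>j<n. complex_of_real ((B ^\<^sub>m k) $$ (l,j)) * v $ j)"
        unfolding Bck using l v B by (simp add: scalar_prod_def row_def lessThan_atLeast0)
      also have "\<dots> \<le> (\<Sum>j<n. norm (complex_of_real ((B ^\<^sub>m k) $$ (l,j)) * v $ j))"
        by (rule norm_sum)
      also have "\<dots> = (\<Sum>j<n. (B ^\<^sub>m k) $$ (l,j) * nv j)"
        by (rule sum.cong, simp, simp add: norm_mult nv_def pow_nonneg[OF B nn l])
      finally show ?thesis .
    qed
    have "\<rho> ^ k * V = (\<Sum>l<n. \<rho> ^ k * nv l)" unfolding V_def by (simp add: sum_distrib_left)
    also have "\<dots> \<le> (\<Sum>l<n. \<Sum>j<n. (B ^\<^sub>m k) $$ (l,j) * nv j)" by (rule sum_mono, rule le) auto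
    also have "\<dots> = (\<Sum>j<n. (\<Sum>l<n. (B ^\<^sub>m k) $$ (l,j)) * nv j)"
      by (subst sum.swap) (simp add: sum_distrib_right)
    finally show ?thesis .
  qed
  have rt: "0 \<le> \<rho> / t" "\<rho> / t < 1" using \<rho>0 t0 t unfolding \<rho>_def by auto
  have "V / (1 - \<rho> / t) = (\<Sum>k. V * (\<rho> / t) ^ k)"
    using suminf_geometric[of "\<rho>/t"] rt suminf_mult[OF summable_geometric[of "\<rho>/t"], of V]
    by simp
  also have "\<dots> \<le> (\<Sum>k. \<Sum>j<n. a j k * nv j)"
  proof (rule suminf_le)
    fix k
    have "V * (\<rho> / t) ^ k = \<rho> ^ k * V / t ^ k" by (simp add: power_divide)
    also have "\<dots> \<le> (\<Sum>j<n. (\<Sum>l<n. (B ^\<^sub>m k) $$ (l,j)) * nv j) / t ^ k"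
      using powk[of k] t0 by (simp add: divide_right_mono)
    also have "\<dots> = (\<Sum>j<n. (\<Sum>l<n. (B ^\<^sub>m k) $$ (l,j)) * nv j / t ^ k)"
      by (rule sum_divide_distrib)
    also have "\<dots> = (\<Sum>j<n. a j k * nv j)" unfolding a_def by (rule sum.cong[OF refl]) simp
    finally show "V * (\<rho> / t) ^ k \<le> (\<Sum>j<n. a j k * nv j)" .
  next
    show "summable (\<lambda>k. V * (\<rho> / t) ^ k)" by (rule summable_mult, rule summable_geometric) (use rt in auto)
    show "summable (\<lambda>k. \<Sum>j<n. a j k * nv j)" by (rule summable_sum, rule summable_mult2, rule summ) auto
  qed
  also have "\<dots> = (\<Sum>j<n. \<Sum>k. a j k * nv j)" by (rule suminf_sum, rule summable_mult2, rule summ) auto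
  also have "\<dots> = (\<Sum>j<n. Z j * nv j)" unfolding Z_def
    by (rule sum.cong[OF refl], rule suminf_mult2[symmetric], rule summ) auto
  also have "\<dots> \<le> (\<Sum>j<n. Z j * V)" by (rule sum_mono, rule mult_left_mono) (use nvV Z_nonneg in auto)
  finally have MV: "V / (1 - \<rho> / t) \<le> (\<Sum>j<n. Z j) * V" by (simp add: sum_distrib_right)
  define M where "M = (\<Sum>j<n. Z j)"
  have M: "t / (t - \<rho>) \<le> M"
  proof -
    have "V * (1 / (1 - \<rho> / t)) \<le> V * M" using MV unfolding M_def by (simp add: mult.commute)
    hence "1 / (1 - \<rho> / t) \<le> M" using V0 by (simp only: mult_le_cancel_left_pos)
    moreover have "1 / (1 - \<rho> / t) = t / (t - \<rho>)" using t0 by (simp add: field_simps)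
    ultimately show ?thesis by simp
  qed
  have tr: "0 < t - \<rho>" using t unfolding \<rho>_def by simp
  have M0: "0 < M" using M t0 tr by (smt (verit) divide_pos_pos)
  define x where "x j = Z j / M" for j
  show ?thesis
  proof (intro exI conjI allI impI)
    fix j assume j: "j < n"
    show "0 \<le> x j" unfolding x_def using Z_nonneg[OF j] M0 by simp
    have "t * x j - (\<Sum>i<n. B $$ (i,j) * x i) = (t * Z j - (\<Sum>i<n. B $$ (i,j) * Z i)) / M"
      unfolding x_def by (simp add: sum_divide_distrib diff_divide_distrib)
    also have "t * Z j - (\<Sum>i<n. B $$ (i,j) * Z i) = t" using Zeq[OF j] t0 by (simp add: field_simps)
    finally have eq: "t * x j - (\<Sum>i<n. B $$ (i,j) * x i) = t / M" .
    show "0 \<le> t * x j - (\<Sum>i<n. B $$ (i,j) * x i)" unfolding eq using t0 M0 by simp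
    have "t / M \<le> t - \<rho>" using M t0 tr M0
      by (simp add: divide_le_eq le_divide_eq mult.commute)
    thus "t * x j - (\<Sum>i<n. B $$ (i,j) * x i) \<le> t - spec_rad B" unfolding eq \<rho>_def .
  next
    show "(\<Sum>j<n. x j) = 1" unfolding x_def M_def using M0 unfolding M_def by (simp add: sum_divide_distrib[symmetric])
  qed
qed

lemma finite_subseq:
  fixes X :: "nat \<Rightarrow> nat \<Rightarrow> real"
  assumes "finite I" and "\<And>m j. j \<in> I \<Longrightarrow> \<bar>X m j\<bar> \<le> K"
  shows "\<exists>r. strict_mono r \<and> (\<forall>j\<in>I. convergent (\<lambda>m. X (r m) j))"
  using assms
proof (induct I rule: finite_induct)
  case empty
  show ?case by (rule exI[of _ id]) (simp add: strict_mono_def)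
next
  case (insert i I)
  from insert obtain r where r: "strict_mono r" "\<forall>j\<in>I. convergent (\<lambda>m. X (r m) j)" by auto
  from seq_monosub[of "\<lambda>m. X (r m) i"] obtain q where q: "strict_mono q"
    "monoseq (\<lambda>m. X (r (q m)) i)" by auto
  have "Bseq (\<lambda>m. X (r (q m)) i)" using insert.prems[of i] by (intro BseqI'[of _ K]) auto
  from Bseq_monoseq_convergent[OF this q(2)] have ci: "convergent (\<lambda>m. X (r (q m)) i)" .
  show ?case
  proof (intro exI[of _ "r \<circ> q"] conjI ballI)
    show "strict_mono (r \<circ> q)" using r q by (simp add: strict_mono_o)
    fix j assume "j \<in> insert i I"
    then consider "j = i" | "j \<in> I" by auto
    thus "convergent (\<lambda>m. X ((r \<circ> q) m) j)"
    proof cases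
      case 1 thus ?thesis using ci by simp
    next
      case 2
      from convergent_subseq_convergent[OF r(2)[rule_format, OF 2] q(1)]
      show ?thesis by (simp add: o_def)
    qed
  qed
qed

lemma perron:
  fixes B :: "real mat"
  assumes B: "B \<in> carrier_mat n n" and n: "0 < n" and nn: "\<forall>i<n. \<forall>j<n. 0 \<le> B $$ (i,j)"
  shows "\<exists>f \<in> carrier_vec n. (\<forall>i<n. 0 \<le> f $ i) \<and> f \<noteq> 0\<^sub>v n \<and>
           transpose_mat B *\<^sub>v f = spec_rad B \<cdot>\<^sub>v f"
proof -
  define \<rho> where "\<rho> = spec_rad B"
  define t where "t m = \<rho> + 1 / real (Suc m)" for m
  define Q where "Q m x \<longleftrightarrow> (\<forall>j<n. 0 \<le> x j) \<and> (\<Sum>j<n. x j) = 1 \<and>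
     (\<forall>j<n. 0 \<le> t m * x j - (\<Sum>i<n. B $$ (i,j) * x i) \<and> t m * x j - (\<Sum>i<n. B $$ (i,j) * x i) \<le> t m - \<rho>)"
    for m and x :: "nat \<Rightarrow> real"
  have "\<forall>m. \<exists>x. Q m x"
  proof
    fix m
    have "spec_rad B < t m" unfolding t_def \<rho>_def by simp
    from approx_eig[OF B n nn this] show "\<exists>x. Q m x" unfolding Q_def \<rho>_def .
  qed
  from choice[OF this] obtain X where XQ: "\<And>m. Q m (X m)" by blast
  have X0: "\<And>m j. j < n \<Longrightarrow> 0 \<le> X m j" using XQ unfolding Q_def by blast
  have X1: "\<And>m. (\<Sum>j<n. X m j) = 1" using XQ unfolding Q_def by blast
  have Xe1: "\<And>m j. j < n \<Longrightarrow> 0 \<le> t m * X m j - (\<Sum>i<n. B $$ (i,j) * X m i)"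
    using XQ unfolding Q_def by blast
  have Xe2: "\<And>m j. j < n \<Longrightarrow> t m * X m j - (\<Sum>i<n. B $$ (i,j) * X m i) \<le> t m - \<rho>"
    using XQ unfolding Q_def by blast
  have Xb: "\<bar>X m j\<bar> \<le> 1" if "j \<in> {..<n}" for m j
  proof -
    have "X m j \<le> (\<Sum>j<n. X m j)" by (rule member_le_sum) (use that X0 in auto)
    thus ?thesis using X1[of m] X0[of j m] that by auto
  qed
  from finite_subseq[of "{..<n}" X 1, OF _ Xb] obtain r where r: "strict_mono r"
    and conv: "\<And>j. j < n \<Longrightarrow> convergent (\<lambda>m. X (r m) j)" by auto
  define L where "L j = lim (\<lambda>m. X (r m) j)" for j
  have LX: "(\<lambda>m. X (r m) j) \<longlonglongrightarrow> L j" if "j < n" for j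
    using conv[OF that] unfolding L_def by (simp add: convergent_LIMSEQ_iff)
  have L0: "0 \<le> L j" if j: "j < n" for j
    by (rule LIMSEQ_le_const[OF LX[OF j]]) (use X0 j in auto)
  have "(\<lambda>m. \<Sum>j<n. X (r m) j) \<longlonglongrightarrow> (\<Sum>j<n. L j)" by (rule tendsto_sum) (use LX in auto)
  moreover have "(\<lambda>m. \<Sum>j<n. X (r m) j) = (\<lambda>m. 1)" using X1 by simp
  ultimately have "(\<lambda>m. 1::real) \<longlonglongrightarrow> (\<Sum>j<n. L j)" by simp
  hence L1: "(\<Sum>j<n. L j) = 1" using LIMSEQ_unique[OF _ tendsto_const] by blast
  have inv0: "(\<lambda>m. 1 / real (Suc (r m))) \<longlonglongrightarrow> 0"
  proof -
    have "(\<lambda>m. inverse (real (Suc m))) \<longlonglongrightarrow> 0" by (rule LIMSEQ_inverse_real_of_nat)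
    from LIMSEQ_subseq_LIMSEQ[OF this r] show ?thesis by (simp add: o_def divide_inverse)
  qed
  have tr: "(\<lambda>m. t (r m)) \<longlonglongrightarrow> \<rho>" unfolding t_def using tendsto_add[OF tendsto_const inv0, of \<rho>] by simp
  have eig: "\<rho> * L j - (\<Sum>i<n. B $$ (i,j) * L i) = 0" if j: "j < n" for j
  proof -
    let ?e = "\<lambda>m. t (r m) * X (r m) j - (\<Sum>i<n. B $$ (i,j) * X (r m) i)"
    have s1: "(\<lambda>m. \<Sum>i<n. B $$ (i,j) * X (r m) i) \<longlonglongrightarrow> (\<Sum>i<n. B $$ (i,j) * L i)"
      by (rule tendsto_sum, rule tendsto_mult[OF tendsto_const], rule LX) auto
    have e1: "?e \<longlonglongrightarrow> \<rho> * L j - (\<Sum>i<n. B $$ (i,j) * L i)"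
      by (rule tendsto_diff[OF tendsto_mult[OF tr LX[OF j]] s1])
    have e2: "?e \<longlonglongrightarrow> 0"
    proof (rule tendsto_sandwich[of "\<lambda>_. 0" _ _ "\<lambda>m. 1 / real (Suc (r m))"])
      show "\<forall>\<^sub>F m in sequentially. 0 \<le> ?e m" using Xe1[OF j] by simp
      have "?e m \<le> 1 / real (Suc (r m))" for m using Xe2[OF j, of "r m"] unfolding t_def by simp
      thus "\<forall>\<^sub>F m in sequentially. ?e m \<le> 1 / real (Suc (r m))" by simp
      show "(\<lambda>_. 0) \<longlonglongrightarrow> (0::real)" by (rule tendsto_const)
      show "(\<lambda>m. 1 / real (Suc (r m))) \<longlonglongrightarrow> 0" by (rule inv0)
    qed
    from LIMSEQ_unique[OF e1 e2] show ?thesis .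
  qed
  define f where "f = vec n L"
  show ?thesis
  proof (intro bexI conjI allI impI)
    show "f \<in> carrier_vec n" unfolding f_def by simp
    fix i assume "i < n" thus "0 \<le> f $ i" unfolding f_def using L0 by simp
  next
    show "f \<noteq> 0\<^sub>v n"
    proof
      assume f0: "f = 0\<^sub>v n"
      have "L j = 0" if "j < n" for j
      proof -
        have "f $ j = 0\<^sub>v n $ j" using f0 by simp
        thus ?thesis using that unfolding f_def by simp
      qed
      hence "(\<Sum>j<n. L j) = 0" by simp
      with L1 show False by simp
    qed
    show "transpose_mat B *\<^sub>v f = spec_rad B \<cdot>\<^sub>v f"
    proof (rule eq_vecI)
      fix j assume "j < dim_vec (spec_rad B \<cdot>\<^sub>v f)"
      hence j: "j < n" unfolding f_def by simp
      have "(transpose_mat B *\<^sub>v f) $ j = (\<Sum>i<n. B $$ (i,j) * L i)"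
        using j B unfolding f_def by (simp add: scalar_prod_def col_def lessThan_atLeast0)
      also have "\<dots> = \<rho> * L j" using eig[OF j] by simp
      finally show "(transpose_mat B *\<^sub>v f) $ j = (spec_rad B \<cdot>\<^sub>v f) $ j"
        using j unfolding f_def \<rho>_def by simp
    next
      show "dim_vec (transpose_mat B *\<^sub>v f) = dim_vec (spec_rad B \<cdot>\<^sub>v f)"
        using B unfolding f_def by simp
    qed
  qed
qed

theorem lemma9:
  fixes S :: nat and A :: "nat \<Rightarrow> 'a set" and p r :: "nat \<Rightarrow> 'a \<Rightarrow> nat \<Rightarrow> real"
    and \<beta> :: real and d :: "nat \<Rightarrow> 'a \<Rightarrow> real"
  assumes "0 < S"
    and "0 < \<beta>"
    and "mdp S A p"
    and "transient S A p"
    and "rand_rule S A d"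
  shows "\<exists>f \<in> carrier_vec S. (\<forall>i<S. 0 \<le> f $ i) \<and> f \<noteq> 0\<^sub>v S \<and>
           transpose_mat (Bmat S A p r \<beta> d) *\<^sub>v f = spec_rad (Bmat S A p r \<beta> d) \<cdot>\<^sub>v f \<and>
           f \<bullet> bvec S A p r \<beta> d > 0"
proof -
  note S0 = assms(1)
  have finA: "\<And>s. s \<le> S \<Longrightarrow> finite (A s)" using assms(3) unfolding mdp_def by auto
  have p0: "\<And>s a s'. s < S \<Longrightarrow> a \<in> A s \<Longrightarrow> s' \<le> S \<Longrightarrow> 0 \<le> p s a s'"
    using assms(3) unfolding mdp_def by auto
  have p1: "\<And>s a. s < S \<Longrightarrow> a \<in> A s \<Longrightarrow> (\<Sum>s'\<le>S. p s a s') = 1"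
    using assms(3) unfolding mdp_def by auto
  have d0: "\<And>s a. s < S \<Longrightarrow> a \<in> A s \<Longrightarrow> 0 \<le> d s a"
    using assms(5) unfolding rand_rule_def by auto
  have d1: "\<And>s. s < S \<Longrightarrow> (\<Sum>a\<in>A s. d s a) = 1"
    using assms(5) unfolding rand_rule_def by auto
  define Bm where "Bm = Bmat S A p r \<beta> d"
  define b where "b = bvec S A p r \<beta> d"
  define \<rho> where "\<rho> = spec_rad Bm"
  have Bm: "Bm \<in> carrier_mat S S" unfolding Bm_def Bmat_def by simp
  have Bent: "Bm $$ (s,s') = (\<Sum>a\<in>A s. p s a s' * d s a * exp (- \<beta> * r s a s'))" if "s < S" "s' < S" for s s'
    unfolding Bm_def Bmat_def using that by simp
  have bent: "b $ s = (\<Sum>a\<in>A s. p s a S * d s a * exp (- \<beta> * r s a S))" if "s < S" for s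
    unfolding b_def bvec_def using that by simp
  have term_nn: "0 \<le> p s a s' * d s a * exp (- \<beta> * r s a s')" if "s < S" "a \<in> A s" "s' \<le> S" for s a s'
    using p0[OF that] d0[OF that(1,2)] by simp
  have Bnn: "\<forall>i<S. \<forall>j<S. 0 \<le> Bm $$ (i,j)"
    using term_nn by (auto simp: Bent intro!: sum_nonneg)
  have Bterm: "p s a s' * d s a * exp (- \<beta> * r s a s') \<le> Bm $$ (s,s')" if "s < S" "s' < S" "a \<in> A s" for s s' a
    unfolding Bent[OF that(1,2)] by (rule member_le_sum) (use that term_nn finA in auto)
  from perron[OF Bm S0 Bnn] obtain f where f: "f \<in> carrier_vec S" "\<forall>i<S. 0 \<le> f $ i" "f \<noteq> 0\<^sub>v S"
    "transpose_mat Bm *\<^sub>v f = spec_rad Bm \<cdot>\<^sub>v f" by auto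
  have \<rho>0: "0 \<le> \<rho>" unfolding \<rho>_def by (rule spec_rad_nonneg[OF Bm S0])
  have BTf: "(\<Sum>i<S. Bm $$ (i,j) * f $ i) = \<rho> * f $ j" if j: "j < S" for j
  proof -
    have "(transpose_mat Bm *\<^sub>v f) $ j = (\<Sum>i<S. Bm $$ (i,j) * f $ i)"
      using j Bm f(1) by (simp add: scalar_prod_def col_def lessThan_atLeast0)
    thus ?thesis using f(4) j f(1) unfolding \<rho>_def by simp
  qed
  have bnn: "0 \<le> b $ s" if "s < S" for s
    unfolding bent[OF that] using term_nn[OF that] by (auto intro!: sum_nonneg)
  have fb: "f \<bullet> b = (\<Sum>i<S. f $ i * b $ i)"
    using f(1) unfolding b_def bvec_def by (simp add: scalar_prod_def lessThan_atLeast0)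
  have "f \<bullet> b > 0"
  proof (rule ccontr)
    assume "\<not> f \<bullet> b > 0"
    hence fb0: "(\<Sum>i<S. f $ i * b $ i) = 0" unfolding fb using f(2) bnn
      by (smt (verit, ccfv_SIG) lessThan_iff mult_nonneg_nonneg sum_nonneg)
    define F where "F = {i. i < S \<and> 0 < f $ i}"
    have FS: "F \<subseteq> {..<S}" unfolding F_def by auto
    obtain s0 where s0: "s0 \<in> F"
    proof -
      from f(1,3) obtain j where j: "j < S" "f $ j \<noteq> 0" by (auto simp: vec_eq_iff)
      with f(2) have "j \<in> F" unfolding F_def by force
      thus ?thesis using that by blast
    qed
    have bF: "b $ s = 0" if "s \<in> F" for s
    proof -
      from that have s: "s < S" "0 < f $ s" unfolding F_def by auto
      have all: "\<forall>i\<in>{..<S}. f $ i * b $ i = 0"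
        using fb0 sum_nonneg_eq_0_iff[of "{..<S}" "\<lambda>i. f $ i * b $ i"] f(2) bnn
        by (simp add: mult_nonneg_nonneg del: mult_eq_0_iff)
      hence "f $ s * b $ s = 0" using s(1) by blast
      thus ?thesis using s by simp
    qed
    have pS: "p s a S = 0" if "s \<in> F" "a \<in> A s" "0 < d s a" for s a
    proof -
      from that have s: "s < S" unfolding F_def by auto
      have "p s a S * d s a * exp (- \<beta> * r s a S) = 0"
        using bF[OF that(1)] unfolding bent[OF s]
        using sum_nonneg_eq_0_iff[of "A s" "\<lambda>a. p s a S * d s a * exp (- \<beta> * r s a S)"]
          finA[of s] s term_nn[OF s _ order.refl] that(2) by auto
      thus ?thesis using that(3) by simp
    qed
    have exd: "\<exists>a. a \<in> A s \<and> 0 < d s a" if "s < S" for s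
    proof (rule ccontr)
      assume "\<not> ?thesis"
      hence "\<forall>a\<in>A s. d s a = 0" using d0[OF that] by force
      hence "(\<Sum>a\<in>A s. d s a) = 0" by simp
      with d1[OF that] show False by simp
    qed
    define \<sigma> where "\<sigma> s = (SOME a. a \<in> A s \<and> 0 < d s a)" for s
    have \<sigma>: "\<sigma> s \<in> A s" "0 < d s (\<sigma> s)" if "s < S" for s
      using someI_ex[OF exd[OF that]] unfolding \<sigma>_def by auto
    have closed: "s' \<in> F" if s: "s \<in> F" and s': "s' < S" and pp: "0 < p s (\<sigma> s) s'" for s s'
    proof -
      from s have sS: "s < S" and fs: "0 < f $ s" unfolding F_def by auto
      have "0 < p s (\<sigma> s) s' * d s (\<sigma> s) * exp (- \<beta> * r s (\<sigma> s) s')"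
        using pp \<sigma>[OF sS] by simp
      also have "\<dots> \<le> Bm $$ (s,s')" by (rule Bterm[OF sS s' \<sigma>(1)[OF sS]])
      finally have Bpos: "0 < Bm $$ (s,s')" .
      have "0 < Bm $$ (s,s') * f $ s" using Bpos fs by simp
      also have "\<dots> \<le> (\<Sum>i<S. Bm $$ (i,s') * f $ i)"
        by (rule member_le_sum[of s "{..<S}" "\<lambda>i. Bm $$ (i,s') * f $ i"]) (use sS Bnn f(2) s' in auto)
      also have "\<dots> = \<rho> * f $ s'" by (rule BTf[OF s'])
      finally have "0 < \<rho> * f $ s'" .
      hence "0 < f $ s'" using \<rho>0 f(2) s' by (simp add: zero_less_mult_iff)
      thus ?thesis using s' unfolding F_def by auto
    qed
    define P where "P = trans_mat S p \<sigma>"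
    have P: "P \<in> carrier_mat S S" unfolding P_def trans_mat_def by simp
    have Pent: "P $$ (s,s') = p s (\<sigma> s) s'" if "s < S" "s' < S" for s s'
      using that unfolding P_def trans_mat_def by simp
    have Pnn: "\<forall>i<S. \<forall>j<S. 0 \<le> P $$ (i,j)" using Pent p0 \<sigma> by auto
    have rowF: "(\<Sum>s'\<in>F. P $$ (l,s')) = 1" if l: "l \<in> F" for l
    proof -
      from l have lS: "l < S" unfolding F_def by auto
      have "1 = (\<Sum>s'\<le>S. p l (\<sigma> l) s')" using p1[OF lS \<sigma>(1)[OF lS]] by simp
      also have "\<dots> = (\<Sum>s'<S. p l (\<sigma> l) s') + p l (\<sigma> l) S" by (simp add: lessThan_Suc_atMost[symmetric])
      also have "p l (\<sigma> l) S = 0" by (rule pS[OF l \<sigma>[OF lS]])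
      also have "(\<Sum>s'<S. p l (\<sigma> l) s') = (\<Sum>s'\<in>F. p l (\<sigma> l) s')"
      proof (rule sum.mono_neutral_right)
        show "\<forall>i\<in>{..<S} - F. p l (\<sigma> l) i = 0"
        proof
          fix i assume i: "i \<in> {..<S} - F"
          have "0 \<le> p l (\<sigma> l) i" using p0[OF lS \<sigma>(1)[OF lS]] i by auto
          moreover have "\<not> 0 < p l (\<sigma> l) i" using closed[OF l] i by auto
          ultimately show "p l (\<sigma> l) i = 0" by simp
        qed
      qed (use FS in auto)
      also have "\<dots> = (\<Sum>s'\<in>F. P $$ (l,s'))" using FS lS by (intro sum.cong) (auto simp: Pent)
      finally show ?thesis by simp
    qed
    have grow: "1 \<le> (\<Sum>s'\<in>F. (P ^\<^sub>m t) $$ (s,s'))" if "s \<in> F" for t s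
      using that
    proof (induct t arbitrary: s)
      case 0
      have sS: "s < S" using 0 unfolding F_def by auto
      have "(\<Sum>s'\<in>F. (P ^\<^sub>m 0) $$ (s,s')) = (\<Sum>s'\<in>F. if s = s' then 1 else 0)"
        using P FS sS by (intro sum.cong) auto
      also have "\<dots> = 1" using 0 FS by (simp add: finite_subset)
      finally show ?case by simp
    next
      case (Suc t)
      have sS: "s < S" using Suc.prems unfolding F_def by auto
      have finF: "finite F" using FS finite_subset by blast
      have "(\<Sum>s'\<in>F. (P ^\<^sub>m Suc t) $$ (s,s')) = (\<Sum>s'\<in>F. \<Sum>l<S. (P ^\<^sub>m t) $$ (s,l) * P $$ (l,s'))"
        using FS sS by (intro sum.cong refl pow_Suc_entry[OF P]) auto
      also have "\<dots> = (\<Sum>l<S. (P ^\<^sub>m t) $$ (s,l) * (\<Sum>s'\<in>F. P $$ (l,s')))"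
        by (subst sum.swap) (simp add: sum_distrib_left)
      also have "\<dots> \<ge> (\<Sum>l\<in>F. (P ^\<^sub>m t) $$ (s,l) * (\<Sum>s'\<in>F. P $$ (l,s')))"
        by (rule sum_mono2) (use FS pow_nonneg[OF P Pnn] Pnn sS in \<open>auto intro!: mult_nonneg_nonneg sum_nonneg\<close>)
      also have "(\<Sum>l\<in>F. (P ^\<^sub>m t) $$ (s,l) * (\<Sum>s'\<in>F. P $$ (l,s'))) = (\<Sum>l\<in>F. (P ^\<^sub>m t) $$ (s,l))"
        using rowF by simp
      finally show ?case using Suc.hyps[OF Suc.prems] by simp
    qed
    have valid: "\<forall>s<S. \<sigma> s \<in> A s" using \<sigma> by auto
    have summ: "summable (\<lambda>t. (P ^\<^sub>m t) $$ (s0, s'))" if "s' \<in> F" for s'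
      using assms(4) valid s0 that unfolding transient_def P_def F_def by blast
    have "summable (\<lambda>t. \<Sum>s'\<in>F. (P ^\<^sub>m t) $$ (s0, s'))" by (rule summable_sum) (use summ in auto)
    from summable_LIMSEQ_zero[OF this] have "(\<lambda>t. \<Sum>s'\<in>F. (P ^\<^sub>m t) $$ (s0, s')) \<longlonglongrightarrow> 0" .
    from LIMSEQ_le_const[OF this, of 1] grow[OF s0] show False by auto
  qed
  thus ?thesis using f unfolding Bm_def b_def by blast
qed

end
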